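(* For every $n\ge1$, the reflexive complete graph $K^n$ is fibrant in the Matsushita model structure on $\mathbf{Gr}$ (and hence, regarded as a loop graph with all vertices looped, in the Matsushita model structure on $\mathbf{Gr}_\ell$); that is, $\mathrm{Ex}^2\mathrm{Sing}\,\mathrm{C}\ell(K^n)$ is a Kan complex.
   Context: A simplicial complex consists of a vertex set and a collection of nonempty finite subsets (simplices) containing all singletons and closed under nonempty subsets; maps are vertex functions preserving simplices; $\mathbf{Cpx}$ is the category. $\mathbf{Gr}$ (reflexive graphs) is the full subcategory of complexes whose simplices have at most two elements; $K^n$ is the reflexive graph on $n$ vertices with all edges. $\mathrm{C}\ell:\mathbf{Gr}\to\mathbf{Cpx}$ is the clique complex functor. $\mathbf{\Delta}^n$ is the complex on $\{0,\dots,n\}$ with all nonempty subsets simplices, $\mathrm{Sing}(K)_n=\mathbf{Cpx}(\mathbf{\Delta}^n,K)$, $\mathrm{Ex}$ is the right adjoint of barycentric subdivision. In the Matsushita model structure on $\mathbf{Gr}$ a map $f$ is a fibration iff $\mathrm{Ex}^2\mathrm{Sing}\,\mathrm{C}\ell(f)$ is a Kan fibration. Loop graphs are sets with a symmetric relation; in the Matsushita model structure on loop graphs a map $f$ is a fibration iff its restriction $f^\circ$ to maximal reflexive subgraphs (induced on looped vertices) is a Matsushita fibration in $\mathbf{Gr}$. *)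

theory Defs
  imports Main
begin

record 'v cpx =
  verts :: "'v set"
  simps :: "'v set set"

definition is_cpx :: "'v cpx \<Rightarrow> bool" where
  "is_cpx K \<longleftrightarrow>
     (\<forall>\<sigma>\<in>simps K. \<sigma> \<noteq> {} \<and> finite \<sigma> \<and> \<sigma> \<subseteq> verts K) \<and>
     (\<forall>v\<in>verts K. {v} \<in> simps K) \<and>
     (\<forall>\<sigma>\<in>simps K. \<forall>\<tau>. \<tau> \<noteq> {} \<and> \<tau> \<subseteq> \<sigma> \<longrightarrow> \<tau> \<in> simps K)"

definition cpx_hom :: "'v cpx \<Rightarrow> 'w cpx \<Rightarrow> ('v \<Rightarrow> 'w) \<Rightarrow> bool" where
  "cpx_hom K L f \<longleftrightarrow> (\<forall>v\<in>verts K. f v \<in> verts L) \<and> (\<forall>\<sigma>\<in>simps K. f ` \<sigma> \<in> simps L)"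

definition is_rgraph :: "'v cpx \<Rightarrow> bool" where
  "is_rgraph G \<longleftrightarrow> is_cpx G \<and> (\<forall>\<sigma>\<in>simps G. card \<sigma> \<le> 2)"

definition Kgraph :: "nat \<Rightarrow> nat cpx" where
  "Kgraph n = \<lparr> verts = {0..<n},
                simps = {\<sigma>. \<sigma> \<noteq> {} \<and> \<sigma> \<subseteq> {0..<n} \<and> card \<sigma> \<le> 2} \<rparr>"

definition clique :: "'v cpx \<Rightarrow> 'v cpx" where
  "clique G = \<lparr> verts = verts G,
                simps = {\<sigma>. \<sigma> \<noteq> {} \<and> finite \<sigma> \<and> \<sigma> \<subseteq> verts G \<and>
                             (\<forall>x\<in>\<sigma>. \<forall>y\<in>\<sigma>. {x, y} \<in> simps G)} \<rparr>"

definition cpxDelta :: "nat \<Rightarrow> nat cpx" where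
  "cpxDelta m = \<lparr> verts = {0..m}, simps = {\<sigma>. \<sigma> \<noteq> {} \<and> \<sigma> \<subseteq> {0..m}} \<rparr>"

text \<open>A monotone map [m] \<rightarrow> [n] of the simplex category, represented by a
  function nat \<Rightarrow> nat (only the values on {0..m} matter).\<close>
definition simp_op :: "nat \<Rightarrow> nat \<Rightarrow> (nat \<Rightarrow> nat) \<Rightarrow> bool" where
  "simp_op m n \<theta> \<longleftrightarrow> (\<forall>i\<le>m. \<theta> i \<le> n) \<and> (\<forall>i j. i \<le> j \<and> j \<le> m \<longrightarrow> \<theta> i \<le> \<theta> j)"

text \<open>cells X n is the set of n-simplices; act X m n \<theta> is \<theta>^* : X_n \<rightarrow> X_m.\<close>
record 'a sset =
  cells :: "nat \<Rightarrow> 'a set"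
  act :: "nat \<Rightarrow> nat \<Rightarrow> (nat \<Rightarrow> nat) \<Rightarrow> 'a \<Rightarrow> 'a"

definition is_sset :: "'a sset \<Rightarrow> bool" where
  "is_sset X \<longleftrightarrow>
    (\<forall>m n \<theta> x. simp_op m n \<theta> \<and> x \<in> cells X n \<longrightarrow> act X m n \<theta> x \<in> cells X m) \<and>
    (\<forall>n x. x \<in> cells X n \<longrightarrow> act X n n (\<lambda>i. i) x = x) \<and>
    (\<forall>l m n \<phi> \<theta> x. simp_op l m \<phi> \<and> simp_op m n \<theta> \<and> x \<in> cells X n \<longrightarrow>
        act X l m \<phi> (act X m n \<theta> x) = act X l n (\<theta> \<circ> \<phi>) x) \<and>
    (\<forall>m n \<theta> \<theta>' x. simp_op m n \<theta> \<and> (\<forall>i\<le>m. \<theta> i = \<theta>' i) \<and> x \<in> cells X n \<longrightarrow>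
        act X m n \<theta> x = act X m n \<theta>' x)"

definition sset_hom :: "'b sset \<Rightarrow> 'a sset \<Rightarrow> (nat \<Rightarrow> 'b \<Rightarrow> 'a) \<Rightarrow> bool" where
  "sset_hom A X f \<longleftrightarrow>
    (\<forall>n a. a \<in> cells A n \<longrightarrow> f n a \<in> cells X n) \<and>
    (\<forall>m n \<theta> a. simp_op m n \<theta> \<and> a \<in> cells A n \<longrightarrow> f m (act A m n \<theta> a) = act X m n \<theta> (f n a)) \<and>
    (\<forall>n a. a \<notin> cells A n \<longrightarrow> f n a = undefined)"

text \<open>Sing(K)_m = Cpx(\<Delta>^m, K) (maps normalised to be undefined off {0..m}).\<close>
definition Sing :: "'v cpx \<Rightarrow> (nat \<Rightarrow> 'v) sset" where
  "Sing K = \<lparr> cells = (\<lambda>m. {f. cpx_hom (cpxDelta m) K f \<and> (\<forall>i>m. f i = undefined)}),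
              act = (\<lambda>m n \<theta> f. (\<lambda>i. if i \<le> m then f (\<theta> i) else undefined)) \<rparr>"

text \<open>Barycentric subdivision of \<Delta>[n]: the nerve of the poset of nonempty
  subsets of {0..n}; a k-simplex is a chain c 0 \<subseteq> ... \<subseteq> c k
  (normalised to {} beyond k).\<close>
definition sdDelta :: "nat \<Rightarrow> (nat \<Rightarrow> nat set) sset" where
  "sdDelta n = \<lparr> cells = (\<lambda>k. {c. (\<forall>i\<le>k. c i \<noteq> {} \<and> c i \<subseteq> {0..n}) \<and>
                                    (\<forall>i j. i \<le> j \<and> j \<le> k \<longrightarrow> c i \<subseteq> c j) \<and>
                                    (\<forall>i>k. c i = {})}),
                 act = (\<lambda>k l \<phi> c. (\<lambda>i. if i \<le> k then c (\<phi> i) else {})) \<rparr>"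

definition sd_map :: "(nat \<Rightarrow> nat) \<Rightarrow> nat \<Rightarrow> (nat \<Rightarrow> nat set) \<Rightarrow> (nat \<Rightarrow> nat set)" where
  "sd_map \<theta> k c = (\<lambda>i. if i \<le> k then \<theta> ` c i else {})"

definition Ex :: "'a sset \<Rightarrow> (nat \<Rightarrow> (nat \<Rightarrow> nat set) \<Rightarrow> 'a) sset" where
  "Ex X = \<lparr> cells = (\<lambda>n. {f. sset_hom (sdDelta n) X f}),
            act = (\<lambda>m n \<theta> f. (\<lambda>k c. if c \<in> cells (sdDelta m) k then f k (sd_map \<theta> k c)
                                     else undefined)) \<rparr>"

definition coface :: "nat \<Rightarrow> nat \<Rightarrow> nat" where
  "coface i j = (if j < i then j else Suc j)"

definition face :: "'a sset \<Rightarrow> nat \<Rightarrow> nat \<Rightarrow> 'a \<Rightarrow> 'a" where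
  "face X n i x = act X (n - 1) n (coface i) x"

text \<open>Kan complex: every horn \<Lambda>^n_k \<rightarrow> X (given as a compatible family of
  n faces x_i, i \<noteq> k) extends to an n-simplex.\<close>
definition kan :: "'a sset \<Rightarrow> bool" where
  "kan X \<longleftrightarrow>
    (\<forall>n k x. 1 \<le> n \<and> k \<le> n \<and>
       (\<forall>i\<le>n. i \<noteq> k \<longrightarrow> x i \<in> cells X (n - 1)) \<and>
       (\<forall>i j. i < j \<and> j \<le> n \<and> i \<noteq> k \<and> j \<noteq> k \<longrightarrow>
            face X (n - 1) i (x j) = face X (n - 1) (j - 1) (x i))
     \<longrightarrow> (\<exists>y\<in>cells X n. \<forall>i\<le>n. i \<noteq> k \<longrightarrow> face X n i y = x i))"

end

theory Submission
  imports Defs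
begin


abbreviation XX :: "nat \<Rightarrow> (nat \<Rightarrow> nat) sset" where
  "XX N \<equiv> Sing (clique (Kgraph N))"

lemma cellsX: "f \<in> cells (XX N) m \<longleftrightarrow> (\<forall>i\<le>m. f i < N) \<and> (\<forall>i>m. f i = undefined)"
proof
  assume "f \<in> cells (XX N) m"
  then show "(\<forall>i\<le>m. f i < N) \<and> (\<forall>i>m. f i = undefined)"
    by (auto simp: Sing_def cpx_hom_def cpxDelta_def clique_def Kgraph_def)
next
  assume A: "(\<forall>i\<le>m. f i < N) \<and> (\<forall>i>m. f i = undefined)"
  have "card {x, y} \<le> 2" for x y :: nat by (cases "x = y") auto
  moreover have "finite \<sigma>" if "\<sigma> \<subseteq> {0..m}" for \<sigma> using that finite_subset by blast
  ultimately show "f \<in> cells (XX N) m" using A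
    by (auto simp: Sing_def cpx_hom_def cpxDelta_def clique_def Kgraph_def)
qed

lemma actX: "act (XX N) m n \<theta> f = (\<lambda>i. if i \<le> m then f (\<theta> i) else undefined)"
  by (simp add: Sing_def)

lemma cells_sd: "c \<in> cells (sdDelta n) k \<longleftrightarrow> (\<forall>i\<le>k. c i \<noteq> {} \<and> c i \<subseteq> {0..n}) \<and>
   (\<forall>i j. i \<le> j \<and> j \<le> k \<longrightarrow> c i \<subseteq> c j) \<and> (\<forall>i>k. c i = {})"
  by (simp add: sdDelta_def)

lemma act_sd: "act (sdDelta n) m k \<theta> c = (\<lambda>i. if i \<le> m then c (\<theta> i) else {})"
  by (simp add: sdDelta_def)

lemma sd_act_cells:
  assumes "simp_op m k \<theta>" "c \<in> cells (sdDelta n) k"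
  shows "act (sdDelta n) m k \<theta> c \<in> cells (sdDelta n) m"
  using assms unfolding cells_sd act_sd simp_op_def by auto

lemma sd_map_cells:
  assumes "\<forall>t\<le>m. \<theta> t \<le> n" "c \<in> cells (sdDelta m) k"
  shows "sd_map \<theta> k c \<in> cells (sdDelta n) k"
  using assms unfolding cells_sd sd_map_def by (auto simp: image_mono) (metis atLeastAtMost_iff subsetD le0)

lemma cells_Ex: "f \<in> cells (Ex Y) n \<longleftrightarrow> sset_hom (sdDelta n) Y f"
  by (simp add: Ex_def)

lemma act_Ex: "act (Ex Y) m n \<theta> f = (\<lambda>k c. if c \<in> cells (sdDelta m) k then f k (sd_map \<theta> k c) else undefined)"
  by (simp add: Ex_def)

definition vtx :: "nat set \<Rightarrow> nat \<Rightarrow> nat set" where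
  "vtx S = (\<lambda>t. if t \<le> 0 then S else {})"

lemma vtx_cells: "S \<noteq> {} \<Longrightarrow> S \<subseteq> {0..n} \<Longrightarrow> vtx S \<in> cells (sdDelta n) 0"
  unfolding cells_sd vtx_def by auto

lemma sd_map_vtx: "sd_map \<theta> 0 (vtx T) = vtx (\<theta> ` T)"
  unfolding sd_map_def vtx_def by (rule ext) auto

definition clampN :: "nat \<Rightarrow> nat \<Rightarrow> nat" where
  "clampN N x = (if x < N then x else 0)"

definition Yc :: "nat \<Rightarrow> nat \<Rightarrow> (nat set set \<Rightarrow> nat) \<Rightarrow>
   (nat \<Rightarrow> (nat \<Rightarrow> nat set) \<Rightarrow> nat \<Rightarrow> (nat \<Rightarrow> nat set) \<Rightarrow> nat \<Rightarrow> nat)" where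
  "Yc N n \<phi> = (\<lambda>k c. if c \<in> cells (sdDelta n) k then
      (\<lambda>j d. if d \<in> cells (sdDelta k) j then
          (\<lambda>i. if i \<le> j then clampN N (\<phi> (c ` d i)) else undefined) else undefined)
      else undefined)"

definition rep :: "nat \<Rightarrow> nat set set \<Rightarrow> bool" where
  "rep n C \<longleftrightarrow> (\<exists>k c S. c \<in> cells (sdDelta n) k \<and> S \<noteq> {} \<and> S \<subseteq> {0..k} \<and> C = c ` S)"

definition valF :: "nat \<Rightarrow> (nat \<Rightarrow> (nat \<Rightarrow> nat set) \<Rightarrow> nat \<Rightarrow> (nat \<Rightarrow> nat set) \<Rightarrow> nat \<Rightarrow> nat) \<Rightarrow> nat set set \<Rightarrow> nat" where
  "valF n F C = (SOME r. \<exists>k c S. c \<in> cells (sdDelta n) k \<and> S \<noteq> {} \<and> S \<subseteq> {0..k} \<and> C = c ` S \<and>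
      r = F k c 0 (vtx S) 0)"

definition img :: "(nat \<Rightarrow> nat) \<Rightarrow> nat set set \<Rightarrow> nat set set" where
  "img \<theta> C = (\<lambda>T. \<theta> ` T) ` C"

lemma Y_inner:
  assumes "N \<ge> 1" and c: "c \<in> cells (sdDelta n) k"
  shows "sset_hom (sdDelta k) (XX N) (Yc N n \<phi> k c)"
  unfolding sset_hom_def
  proof (intro conjI allI impI)
    fix j d assume "d \<in> cells (sdDelta k) j"
    then show "Yc N n \<phi> k c j d \<in> cells (XX N) j"
      using c assms by (simp add: Yc_def cellsX clampN_def)
  next
    fix m j \<theta> d assume md: "simp_op m j \<theta> \<and> d \<in> cells (sdDelta k) j"
    then have "act (sdDelta k) m j \<theta> d \<in> cells (sdDelta k) m" using sd_act_cells by blast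
    then show "Yc N n \<phi> k c m (act (sdDelta k) m j \<theta> d) = act (XX N) m j \<theta> (Yc N n \<phi> k c j d)"
      using c md by (auto simp: Yc_def actX act_sd simp_op_def)
  next
    fix j d assume "d \<notin> cells (sdDelta k) j"
    then show "Yc N n \<phi> k c j d = undefined" using c by (simp add: Yc_def)
  qed

lemma Y_mem:
  assumes "N \<ge> 1"
  shows "Yc N n \<phi> \<in> cells (Ex (Ex (XX N))) n"
  unfolding cells_Ex[where n=n] sset_hom_def
proof (intro conjI allI impI)
  fix k c assume c: "c \<in> cells (sdDelta n) k"
  show "Yc N n \<phi> k c \<in> cells (Ex (XX N)) k"
    unfolding cells_Ex by (rule Y_inner[OF assms c])
next
  fix m k \<theta> c assume mc: "simp_op m k \<theta> \<and> c \<in> cells (sdDelta n) k"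
  then have ac: "act (sdDelta n) m k \<theta> c \<in> cells (sdDelta n) m" using sd_act_cells by blast
  have th: "\<forall>t\<le>m. \<theta> t \<le> k" using mc by (simp add: simp_op_def)
  show "Yc N n \<phi> m (act (sdDelta n) m k \<theta> c) = act (Ex (XX N)) m k \<theta> (Yc N n \<phi> k c)"
  proof (rule ext, rule ext)
    fix j d
    show "Yc N n \<phi> m (act (sdDelta n) m k \<theta> c) j d = act (Ex (XX N)) m k \<theta> (Yc N n \<phi> k c) j d"
    proof (cases "d \<in> cells (sdDelta m) j")
      case True
      have sm: "sd_map \<theta> j d \<in> cells (sdDelta k) j" using sd_map_cells[OF th True] .
      have eq: "(\<lambda>t. if t \<le> m then c (\<theta> t) else {}) ` d i = c ` sd_map \<theta> j d i" if "i \<le> j" for i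
      proof -
        have "d i \<subseteq> {0..m}" using True that by (simp add: cells_sd)
        then show ?thesis using that by (force simp: sd_map_def)
      qed
      show ?thesis using True ac sm mc eq by (auto simp: Yc_def act_Ex act_sd)
    next
      case False
      then show ?thesis using ac by (simp add: Yc_def act_Ex)
    qed
  qed
next
  fix k c assume "c \<notin> cells (sdDelta n) k"
  then show "Yc N n \<phi> k c = undefined" by (simp add: Yc_def)
qed


lemma Y_act:
  assumes th: "\<forall>t\<le>m. \<theta> t \<le> n"
  shows "act (Ex (Ex (XX N))) m n \<theta> (Yc N n \<phi>) = Yc N m (\<phi> \<circ> img \<theta>)"
proof (rule ext, rule ext)
  fix k c
  show "act (Ex (Ex (XX N))) m n \<theta> (Yc N n \<phi>) k c = Yc N m (\<phi> \<circ> img \<theta>) k c"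
  proof (cases "c \<in> cells (sdDelta m) k")
    case True
    have sm: "sd_map \<theta> k c \<in> cells (sdDelta n) k" using sd_map_cells[OF th True] .
    have eq: "sd_map \<theta> k c ` d i = img \<theta> (c ` d i)" if "d \<in> cells (sdDelta k) j" "i \<le> j" for d i j
    proof -
      have "d i \<subseteq> {0..k}" using that by (simp add: cells_sd)
      then show ?thesis by (force simp: sd_map_def img_def)
    qed
    have "Yc N n \<phi> k (sd_map \<theta> k c) = Yc N m (\<phi> \<circ> img \<theta>) k c"
      unfolding Yc_def using True sm eq by (intro ext) simp
    then show ?thesis using True by (simp add: act_Ex)
  next
    case False
    then show ?thesis by (simp add: Yc_def act_Ex)
  qed
qed

lemma Y_cong:
  assumes "\<And>C. rep n C \<Longrightarrow> clampN N (\<phi> C) = clampN N (\<psi> C)"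
  shows "Yc N n \<phi> = Yc N n \<psi>"
proof -
  have "clampN N (\<phi> (c ` d i)) = clampN N (\<psi> (c ` d i))"
    if "c \<in> cells (sdDelta n) k" "d \<in> cells (sdDelta k) j" "i \<le> j" for c k d j i
  proof -
    have "d i \<noteq> {}" "d i \<subseteq> {0..k}" using that by (auto simp: cells_sd)
    then have "rep n (c ` d i)" unfolding rep_def using that by blast
    then show ?thesis by (rule assms)
  qed
  then show ?thesis unfolding Yc_def by (intro ext) simp
qed

lemma valY:
  assumes "rep n C"
  shows "clampN N (valF n (Yc N n \<phi>) C) = clampN N (\<phi> C)"
proof -
  let ?P = "\<lambda>r. \<exists>k c S. c \<in> cells (sdDelta n) k \<and> S \<noteq> {} \<and> S \<subseteq> {0..k} \<and> C = c ` S \<and>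
      r = Yc N n \<phi> k c 0 (vtx S) 0"
  have allP: "r = clampN N (\<phi> C)" if "?P r" for r
  proof -
    from that obtain k c S where h: "c \<in> cells (sdDelta n) k" "S \<noteq> {}" "S \<subseteq> {0..k}" "C = c ` S"
      "r = Yc N n \<phi> k c 0 (vtx S) 0" by blast
    have "vtx S \<in> cells (sdDelta k) 0" using vtx_cells h by blast
    then show ?thesis using h by (simp add: Yc_def vtx_def)
  qed
  from assms obtain k c S where h: "c \<in> cells (sdDelta n) k" "S \<noteq> {}" "S \<subseteq> {0..k}" "C = c ` S"
    unfolding rep_def by blast
  then have "?P (Yc N n \<phi> k c 0 (vtx S) 0)" by blast
  then have "?P (valF n (Yc N n \<phi>) C)" unfolding valF_def by (rule someI)
  then have "valF n (Yc N n \<phi>) C = clampN N (\<phi> C)" using allP by blast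
  then show ?thesis by (simp add: clampN_def)
qed

lemma rep_img:
  assumes "rep m D" "\<forall>t\<le>m. \<theta> t \<le> n"
  shows "rep n (img \<theta> D)"
proof -
  from assms obtain k c S where h: "c \<in> cells (sdDelta m) k" "S \<noteq> {}" "S \<subseteq> {0..k}" "D = c ` S"
    unfolding rep_def by blast
  have "sd_map \<theta> k c \<in> cells (sdDelta n) k" using sd_map_cells assms h by blast
  moreover have "img \<theta> D = sd_map \<theta> k c ` S"
    unfolding img_def h(4) image_image by (rule image_cong) (use h in \<open>auto simp: sd_map_def\<close>)
  ultimately show ?thesis unfolding rep_def using h by blast
qed

abbreviation ZZ :: "nat \<Rightarrow> _" where "ZZ N \<equiv> Ex (Ex (XX N))"

lemma K_inner:
  assumes F: "F \<in> cells (ZZ N) n" and c: "c \<in> cells (sdDelta n) k"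
    and d: "d \<in> cells (sdDelta k) j" and i: "i \<le> j"
  shows "F k c j d i = F k c 0 (vtx (d i)) 0"
proof -
  have "F k c \<in> cells (Ex (XX N)) k"
    using F c unfolding cells_Ex[where n=n] sset_hom_def by blast
  then have g: "sset_hom (sdDelta k) (XX N) (F k c)" by (simp add: cells_Ex)
  have so: "simp_op 0 j (\<lambda>_. i)" using i by (simp add: simp_op_def)
  have "F k c 0 (act (sdDelta k) 0 j (\<lambda>_. i) d) = act (XX N) 0 j (\<lambda>_. i) (F k c j d)"
    using g so d unfolding sset_hom_def by blast
  moreover have "act (sdDelta k) 0 j (\<lambda>_. i) d = vtx (d i)" by (simp add: act_sd vtx_def)
  ultimately show ?thesis by (simp add: actX)
qed

lemma N_nat:
  assumes F: "F \<in> cells (ZZ N) n" and c: "c \<in> cells (sdDelta n) k"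
    and so: "simp_op m k \<theta>" and T: "T \<noteq> {}" "T \<subseteq> {0..m}"
  shows "F m (act (sdDelta n) m k \<theta> c) 0 (vtx T) 0 = F k c 0 (vtx (\<theta> ` T)) 0"
proof -
  have "F m (act (sdDelta n) m k \<theta> c) = act (Ex (XX N)) m k \<theta> (F k c)"
    using F c so unfolding cells_Ex[where n=n] sset_hom_def by blast
  then show ?thesis using vtx_cells[OF T] by (simp add: act_Ex sd_map_vtx)
qed



lemma nth_image_set: "(\<lambda>t. xs ! t) ` {..<length xs} = set xs"
  by (auto simp: set_conv_nth)

lemma enum_ex:
  assumes "S \<noteq> {}" "S \<subseteq> {0..k}"
  shows "\<exists>m \<theta>. simp_op m k \<theta> \<and> \<theta> ` {0..m} = S"
proof -
  define xs where "xs = sorted_list_of_set S"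
  have fin: "finite S" using assms(2) finite_subset by blast
  have setxs: "set xs = S" unfolding xs_def using fin by (rule set_sorted_list_of_set)
  have sorted: "sorted xs" unfolding xs_def by (rule sorted_sorted_list_of_set)
  have ne: "xs \<noteq> []" using setxs assms(1) by auto
  define m where "m = length xs - 1"
  have rng: "{0..m} = {..<length xs}" using ne unfolding m_def by (cases xs) auto
  have img: "(\<lambda>t. xs ! t) ` {0..m} = S" unfolding rng nth_image_set setxs ..
  have "simp_op m k (\<lambda>t. xs ! t)"
    unfolding simp_op_def
  proof (intro conjI allI impI)
    fix i assume "i \<le> m"
    then have "i \<in> {0..m}" by simp
    then have "xs ! i \<in> (\<lambda>t. xs ! t) ` {0..m}" by (rule imageI)
    then have "xs ! i \<in> S" using img by simp
    then have "xs ! i \<in> {0..k}" using assms(2) by blast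
    then show "xs ! i \<le> k" by simp
  next
    fix i j assume ij: "i \<le> j \<and> j \<le> m"
    then have "j \<in> {0..m}" by simp
    then have "j \<in> {..<length xs}" unfolding rng .
    then have jl: "j < length xs" by simp
    have ij2: "i \<le> j" using ij by simp
    show "xs ! i \<le> xs ! j" by (rule sorted_nth_mono[OF sorted ij2 jl])
  qed
  then show ?thesis using img by blast
qed

lemma mono_sd: "c \<in> cells (sdDelta n) k \<Longrightarrow> i \<le> j \<Longrightarrow> j \<le> k \<Longrightarrow> c i \<subseteq> c j"
  by (simp add: cells_sd)

lemma D1:
  assumes F: "F \<in> cells (ZZ N) n" and c: "c \<in> cells (sdDelta n) k"
    and S: "S \<noteq> {}" "S \<subseteq> {0..k}" and S2: "S2 \<noteq> {}" "S2 \<subseteq> {0..k}" and eq: "c ` S = c ` S2"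
  shows "F k c 0 (vtx S) 0 = F k c 0 (vtx S2) 0"
proof -
  define g where "g X = (LEAST s'. c s' = X)" for X
  define \<rho> where "\<rho> s = g (c s)" for s
  have r1: "\<rho> s \<le> s" for s unfolding \<rho>_def g_def by (rule Least_le[of "\<lambda>s'. c s' = c s" s]) simp
  have r2: "c (\<rho> s) = c s" for s unfolding \<rho>_def g_def by (rule LeastI[of "\<lambda>s'. c s' = c s" s]) simp
  have so: "simp_op k k \<rho>"
    unfolding simp_op_def
  proof (intro conjI allI impI)
    fix i assume "i \<le> k" then show "\<rho> i \<le> k" using r1 le_trans by blast
  next
    fix i j assume ij: "i \<le> j \<and> j \<le> k"
    show "\<rho> i \<le> \<rho> j"
    proof (rule ccontr)
      assume "\<not> \<rho> i \<le> \<rho> j"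
      then have lt: "\<rho> j < \<rho> i" by simp
      have "\<rho> i \<le> k" using r1[of i] ij by linarith
      then have "c (\<rho> j) \<subseteq> c (\<rho> i)" using mono_sd[OF c] lt by simp
      then have "c j \<subseteq> c i" using r2 by simp
      moreover have "c i \<subseteq> c j" using mono_sd[OF c] ij by blast
      ultimately have "c i = c j" by blast
      then have "\<rho> i = \<rho> j" unfolding \<rho>_def by simp
      then show False using lt by simp
    qed
  qed
  have act: "act (sdDelta n) k k \<rho> c = c"
  proof (rule ext)
    fix t show "act (sdDelta n) k k \<rho> c t = c t"
      using r2 c by (auto simp: act_sd cells_sd)
  qed
  have e1: "F k c 0 (vtx S) 0 = F k c 0 (vtx (\<rho> ` S)) 0" using N_nat[OF F c so S] act by simp
  have e2: "F k c 0 (vtx S2) 0 = F k c 0 (vtx (\<rho> ` S2)) 0" using N_nat[OF F c so S2] act by simp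
  have "\<rho> ` S = g ` (c ` S)" "\<rho> ` S2 = g ` (c ` S2)" unfolding \<rho>_def by auto
  then show ?thesis using e1 e2 eq by simp
qed

lemma psi:
  assumes F: "F \<in> cells (ZZ N) n" and a: "a \<in> cells (sdDelta n) m" and b: "b \<in> cells (sdDelta n) m'"
    and eq: "a ` {0..m} = b ` {0..m'}"
  shows "F m a 0 (vtx {0..m}) 0 = F m' b 0 (vtx {0..m'}) 0"
proof -
  define \<psi> where "\<psi> t = (LEAST s. b s = a t)" for t
  have p1: "b (\<psi> t) = a t \<and> \<psi> t \<le> m'" if "t \<le> m" for t
  proof -
    have "a t \<in> a ` {0..m}" using that by simp
    then have "a t \<in> b ` {0..m'}" using eq by simp
    then obtain s where s: "s \<le> m'" "b s = a t" by auto
    have "b (\<psi> t) = a t" unfolding \<psi>_def by (rule LeastI[of "\<lambda>s. b s = a t" s]) (rule s(2))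
    moreover have "\<psi> t \<le> s" unfolding \<psi>_def by (rule Least_le[of "\<lambda>s. b s = a t" s]) (rule s(2))
    ultimately show ?thesis using s by simp
  qed
  have so: "simp_op m m' \<psi>"
    unfolding simp_op_def
  proof (intro conjI allI impI)
    fix i assume "i \<le> m" then show "\<psi> i \<le> m'" using p1 by blast
  next
    fix i j assume ij: "i \<le> j \<and> j \<le> m"
    show "\<psi> i \<le> \<psi> j"
    proof (rule ccontr)
      assume "\<not> \<psi> i \<le> \<psi> j"
      then have lt: "\<psi> j < \<psi> i" by simp
      have im: "i \<le> m" using ij by simp
      have "b (\<psi> j) \<subseteq> b (\<psi> i)" using mono_sd[OF b, of "\<psi> j" "\<psi> i"] lt p1[OF im] by simp
      then have "a j \<subseteq> a i" using p1 ij im by simp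
      moreover have "a i \<subseteq> a j" using mono_sd[OF a] ij by blast
      ultimately have "a i = a j" by blast
      then have "\<psi> i = \<psi> j" unfolding \<psi>_def by simp
      then show False using lt by simp
    qed
  qed
  have act: "act (sdDelta n) m m' \<psi> b = a"
  proof (rule ext)
    fix t show "act (sdDelta n) m m' \<psi> b t = a t"
    proof (cases "t \<le> m")
      case True then show ?thesis using p1[OF True] by (simp add: act_sd)
    next
      case False
      then have "a t = {}" using a by (simp add: cells_sd)
      then show ?thesis using False by (simp add: act_sd)
    qed
  qed
  have T: "{0..m} \<noteq> {}" "{0..m} \<subseteq> {0..m}" by auto
  have e1: "F m a 0 (vtx {0..m}) 0 = F m' b 0 (vtx (\<psi> ` {0..m})) 0"
    using N_nat[OF F b so T] act by simp
  have "b ` \<psi> ` {0..m} = a ` {0..m}" unfolding image_image by (rule image_cong) (auto simp: p1)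
  then have ie: "b ` (\<psi> ` {0..m}) = b ` {0..m'}" using eq by simp
  have ne: "\<psi> ` {0..m} \<noteq> {}" by simp
  have sub: "\<psi> ` {0..m} \<subseteq> {0..m'}" using p1 by auto
  have ne2: "{0..m'} \<noteq> {}" by simp
  have sub2: "{0..m'} \<subseteq> {0..m'}" by simp
  have "F m' b 0 (vtx (\<psi> ` {0..m})) 0 = F m' b 0 (vtx {0..m'}) 0"
    by (rule D1[OF F b ne sub ne2 sub2 ie])
  from trans[OF e1 this] show ?thesis .
qed

lemma reduce:
  assumes F: "F \<in> cells (ZZ N) n" and c: "c \<in> cells (sdDelta n) k"
    and S: "S \<noteq> {}" "S \<subseteq> {0..k}"
  shows "\<exists>m a. a \<in> cells (sdDelta n) m \<and> a ` {0..m} = c ` S \<and>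
     F k c 0 (vtx S) 0 = F m a 0 (vtx {0..m}) 0"
proof -
  obtain m \<theta> where so: "simp_op m k \<theta>" and im: "\<theta> ` {0..m} = S" using enum_ex[OF S] by blast
  let ?a = "act (sdDelta n) m k \<theta> c"
  have a: "?a \<in> cells (sdDelta n) m" using sd_act_cells[OF so c] .
  have T: "{0..m} \<noteq> {}" "{0..m} \<subseteq> {0..m}" by auto
  have "F m ?a 0 (vtx {0..m}) 0 = F k c 0 (vtx S) 0" using N_nat[OF F c so T] im by simp
  moreover have "?a ` {0..m} = c ` \<theta> ` {0..m}" unfolding image_image by (rule image_cong) (auto simp: act_sd)
  then have "?a ` {0..m} = c ` S" using im by simp
  ultimately show ?thesis using a by (intro exI[of _ m] exI[of _ ?a]) simp
qed

lemma K2: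
  assumes F: "F \<in> cells (ZZ N) n" and c: "c \<in> cells (sdDelta n) k"
    and S: "S \<noteq> {}" "S \<subseteq> {0..k}"
    and c': "c' \<in> cells (sdDelta n) k'" and S': "S' \<noteq> {}" "S' \<subseteq> {0..k'}"
    and eq: "c ` S = c' ` S'"
  shows "F k c 0 (vtx S) 0 = F k' c' 0 (vtx S') 0"
proof -
  obtain m a where a: "a \<in> cells (sdDelta n) m" "a ` {0..m} = c ` S"
     "F k c 0 (vtx S) 0 = F m a 0 (vtx {0..m}) 0" using reduce[OF F c S] by blast
  obtain m' b where b: "b \<in> cells (sdDelta n) m'" "b ` {0..m'} = c' ` S'"
     "F k' c' 0 (vtx S') 0 = F m' b 0 (vtx {0..m'}) 0" using reduce[OF F c' S'] by blast
  show ?thesis using psi[OF F a(1) b(1)] a b eq by simp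
qed



lemma Fk_hom:
  assumes F: "F \<in> cells (ZZ N) n" and c: "c \<in> cells (sdDelta n) k"
  shows "sset_hom (sdDelta k) (XX N) (F k c)"
proof -
  have "F k c \<in> cells (Ex (XX N)) k"
    using F c unfolding cells_Ex[where n=n] sset_hom_def by blast
  then show ?thesis by (simp add: cells_Ex)
qed

lemma val_Y:
  assumes F: "F \<in> cells (ZZ N) n"
  shows "F = Yc N n (valF n F)"
proof -
  have Fh: "sset_hom (sdDelta n) (Ex (XX N)) F" using F by (simp add: cells_Ex[where n=n])
  have valeq: "valF n F (c ` S) = F k c 0 (vtx S) 0"
    if c: "c \<in> cells (sdDelta n) k" and S: "S \<noteq> {}" "S \<subseteq> {0..k}" for c k S
    unfolding valF_def
  proof (rule someI2[of _ "F k c 0 (vtx S) 0"])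
    show "\<exists>k' c' S'. c' \<in> cells (sdDelta n) k' \<and> S' \<noteq> {} \<and> S' \<subseteq> {0..k'} \<and> c ` S = c' ` S' \<and>
      F k c 0 (vtx S) 0 = F k' c' 0 (vtx S') 0" using c S by blast
  next
    fix r assume "\<exists>k' c' S'. c' \<in> cells (sdDelta n) k' \<and> S' \<noteq> {} \<and> S' \<subseteq> {0..k'} \<and> c ` S = c' ` S' \<and>
      r = F k' c' 0 (vtx S') 0"
    then obtain k' c' S' where h: "c' \<in> cells (sdDelta n) k'" "S' \<noteq> {}" "S' \<subseteq> {0..k'}" "c ` S = c' ` S'"
      "r = F k' c' 0 (vtx S') 0" by blast
    show "r = F k c 0 (vtx S) 0" using K2[OF F c S h(1) h(2) h(3) h(4)] h(5) by simp
  qed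
  have lt: "F k c 0 (vtx S) 0 < N"
    if c: "c \<in> cells (sdDelta n) k" and S: "S \<noteq> {}" "S \<subseteq> {0..k}" for c k S
  proof -
    have "F k c 0 (vtx S) \<in> cells (XX N) 0"
      using Fk_hom[OF F c] vtx_cells[OF S] unfolding sset_hom_def by blast
    then show ?thesis by (simp add: cellsX)
  qed
  show ?thesis
  proof (intro ext)
    fix k c j d i
    show "F k c j d i = Yc N n (valF n F) k c j d i"
    proof (cases "c \<in> cells (sdDelta n) k")
      case False
      then have "F k c = undefined" using Fh unfolding sset_hom_def by blast
      then show ?thesis using False by (simp add: Yc_def)
    next
      case c: True
      have g: "sset_hom (sdDelta k) (XX N) (F k c)" by (rule Fk_hom[OF F c])
      show ?thesis
      proof (cases "d \<in> cells (sdDelta k) j")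
        case False
        then have "F k c j d = undefined" using g unfolding sset_hom_def by blast
        then show ?thesis using False c by (simp add: Yc_def)
      next
        case d: True
        have mem: "F k c j d \<in> cells (XX N) j" using g d unfolding sset_hom_def by blast
        show ?thesis
        proof (cases "i \<le> j")
          case True
          have S: "d i \<noteq> {}" "d i \<subseteq> {0..k}" using d True by (auto simp: cells_sd)
          have "F k c j d i = F k c 0 (vtx (d i)) 0" by (rule K_inner[OF F c d True])
          moreover have "valF n F (c ` d i) = F k c 0 (vtx (d i)) 0" by (rule valeq[OF c S])
          moreover have "F k c 0 (vtx (d i)) 0 < N" by (rule lt[OF c S])
          ultimately show ?thesis using c d True by (simp add: Yc_def clampN_def)
        next
          case False
          then show ?thesis using mem c d by (simp add: Yc_def cellsX)
        qed
      qed
    qed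
  qed
qed

lemma valF_act:
  assumes F: "F \<in> cells (ZZ N) n" and th: "\<forall>t\<le>m. \<theta> t \<le> n" and D: "rep m D"
  shows "clampN N (valF m (act (ZZ N) m n \<theta> F) D) = clampN N (valF n F (img \<theta> D))"
proof -
  have "act (ZZ N) m n \<theta> F = Yc N m (valF n F \<circ> img \<theta>)"
    using Y_act[OF th, of N "valF n F"] val_Y[OF F] by simp
  then show ?thesis using valY[OF D, of N "valF n F \<circ> img \<theta>"] by simp
qed



lemma rep_full:
  assumes "rep n C"
  shows "\<exists>k c. c \<in> cells (sdDelta n) k \<and> C = c ` {0..k}"
proof -
  from assms obtain k c S where h: "c \<in> cells (sdDelta n) k" "S \<noteq> {}" "S \<subseteq> {0..k}" "C = c ` S"
    unfolding rep_def by blast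
  obtain m \<theta> where so: "simp_op m k \<theta>" and im: "\<theta> ` {0..m} = S" using enum_ex[OF h(2) h(3)] by blast
  let ?a = "act (sdDelta n) m k \<theta> c"
  have a: "?a \<in> cells (sdDelta n) m" using sd_act_cells[OF so h(1)] .
  have "?a ` {0..m} = c ` \<theta> ` {0..m}" unfolding image_image by (rule image_cong) (auto simp: act_sd)
  then have "C = ?a ` {0..m}" using im h(4) by simp
  then show ?thesis using a by (intro exI[of _ m] exI[of _ ?a]) simp
qed

lemma coface_le: "coface a t \<le> Suc t"
  by (simp add: coface_def)

lemma coface_inj: "inj (coface a)"
  by (rule injI) (auto simp: coface_def split: if_splits)

lemma coface_hit: "x \<noteq> a \<Longrightarrow> coface a (if x < a then x else x - 1) = x"
  by (auto simp: coface_def)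

lemma coface_ne: "coface a t \<noteq> a"
  by (simp add: coface_def)

lemma coface_comm: "a < b \<Longrightarrow> coface b (coface a t) = coface a (coface (b - 1) t)"
  by (auto simp: coface_def)

lemma img_comp: "img f (img g D) = img (f \<circ> g) D"
  unfolding img_def image_image comp_def by (rule refl)

lemma img_inj: "img (coface a) D = img (coface a) D' \<Longrightarrow> D = D'"
proof -
  have "inj_on (image (coface a)) (Pow UNIV)" by (rule inj_on_image_Pow[OF coface_inj])
  then have i1: "inj (image (coface a))" by (simp only: Pow_UNIV)
  assume "img (coface a) D = img (coface a) D'"
  then have "image (coface a) ` D = image (coface a) ` D'" unfolding img_def .
  then show "D = D'" by (simp only: inj_image_eq_iff[OF i1])
qed

lemma img_avoid: "T \<in> img (coface a) D \<Longrightarrow> a \<notin> T"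
proof -
  assume "T \<in> img (coface a) D"
  then obtain X where X: "T = coface a ` X" unfolding img_def by blast
  show "a \<notin> T"
  proof
    assume "a \<in> T"
    then obtain x where "a = coface a x" using X by blast
    moreover have "coface a x \<noteq> a" by (rule coface_ne)
    ultimately show False by simp
  qed
qed

lemma img_cong: "(\<And>t. f t = g t) \<Longrightarrow> img f D = img g D"
proof -
  assume "\<And>t. f t = g t" then have "f = g" by (rule ext)
  then show ?thesis by simp
qed

lemma rep_pre:
  assumes C: "rep n C" and a: "a \<le> n" and n: "1 \<le> n" and av: "\<forall>T\<in>C. a \<notin> T"
  shows "\<exists>D. rep (n - 1) D \<and> C = img (coface a) D"
proof -
  obtain k c where c: "c \<in> cells (sdDelta n) k" and Ceq: "C = c ` {0..k}" using rep_full[OF C] by blast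
  define c' where "c' t = (if t \<le> k then {u. coface a u \<in> c t} else {})" for t
  have avt: "a \<notin> c t" if "t \<le> k" for t using av Ceq that by auto
  have bk: "coface a ` c' t = c t" if "t \<le> k" for t
  proof
    show "coface a ` c' t \<subseteq> c t" using that by (auto simp: c'_def)
  next
    show "c t \<subseteq> coface a ` c' t"
    proof
      fix x assume x: "x \<in> c t"
      then have "x \<noteq> a" using avt[OF that] by blast
      then have e: "coface a (if x < a then x else x - 1) = x" by (rule coface_hit)
      then have "(if x < a then x else x - 1) \<in> c' t" using x that by (simp add: c'_def)
      then show "x \<in> coface a ` c' t" using e by (metis imageI)
    qed
  qed
  have c'cells: "c' \<in> cells (sdDelta (n - 1)) k"
    unfolding cells_sd
  proof (intro conjI allI impI)
    fix i assume i: "i \<le> k"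
    have "c i \<noteq> {}" using c i by (simp add: cells_sd)
    then show "c' i \<noteq> {}" using bk[OF i] by auto
    show "c' i \<subseteq> {0..n - 1}"
    proof
      fix u assume "u \<in> c' i"
      then have "coface a u \<in> c i" using i by (simp add: c'_def)
      moreover have "c i \<subseteq> {0..n}" using c i by (simp add: cells_sd)
      ultimately have "coface a u \<le> n" by auto
      then show "u \<in> {0..n - 1}" using a by (auto simp: coface_def split: if_splits)
    qed
  next
    fix i j assume ij: "i \<le> j \<and> j \<le> k"
    then have "c i \<subseteq> c j" using c by (simp add: cells_sd)
    then show "c' i \<subseteq> c' j" using ij by (auto simp: c'_def)
  next
    fix i assume "k < i" then show "c' i = {}" by (simp add: c'_def)
  qed
  have e: "img (coface a) (c' ` {0..k}) = C"
    unfolding img_def Ceq image_image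
  proof (rule image_cong[OF refl])
    fix x assume "x \<in> {0..k}"
    then have "x \<le> k" by simp
    then show "coface a ` c' x = c x" by (rule bk)
  qed
  have r: "rep (n - 1) (c' ` {0..k})" unfolding rep_def
    by (intro exI[of _ k] exI[of _ c'] exI[of _ "{0..k}"] conjI c'cells) auto
  show ?thesis
  proof (rule exI[of _ "c' ` {0..k}"], rule conjI)
    show "rep (n - 1) (c' ` {0..k})" by (rule r)
    show "C = img (coface a) (c' ` {0..k})" by (rule e[symmetric])
  qed
qed



lemma face_ZZ: "face (ZZ N) n i F = act (ZZ N) (n - 1) n (coface i) F"
  by (simp add: face_def)

lemma coface_bound: "1 \<le> n \<Longrightarrow> \<forall>t\<le>n - 1. coface i t \<le> n"
proof (intro allI impI)
  fix t assume "1 \<le> n" "t \<le> n - 1"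
  then have "Suc t \<le> n" by simp
  then show "coface i t \<le> n" using coface_le[of i t] by linarith
qed

theorem lemma6p5:
  fixes n :: nat
  assumes "n \<ge> 1"
  shows "kan (Ex (Ex (Sing (clique (Kgraph n)))))"
  unfolding kan_def
proof (intro allI impI)
  fix nn kh x
  assume H: "1 \<le> nn \<and> kh \<le> nn \<and>
       (\<forall>i\<le>nn. i \<noteq> kh \<longrightarrow> x i \<in> cells (ZZ n) (nn - 1)) \<and>
       (\<forall>i j. i < j \<and> j \<le> nn \<and> i \<noteq> kh \<and> j \<noteq> kh \<longrightarrow>
            face (ZZ n) (nn - 1) i (x j) = face (ZZ n) (nn - 1) (j - 1) (x i))"
  have nn: "1 \<le> nn" and kh: "kh \<le> nn" using H by auto
  have xi: "x i \<in> cells (ZZ n) (nn - 1)" if "i \<le> nn" "i \<noteq> kh" for i using H that by blast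
  have compat: "face (ZZ n) (nn - 1) i (x j) = face (ZZ n) (nn - 1) (j - 1) (x i)"
    if "i < j" "j \<le> nn" "i \<noteq> kh" "j \<noteq> kh" for i j using H that by blast
  have cons_lt: "clampN n (valF (nn - 1) (x i) D) = clampN n (valF (nn - 1) (x j) D')"
    if ij: "i < j" "j \<le> nn" "i \<noteq> kh" "j \<noteq> kh" and D: "rep (nn - 1) D" and D': "rep (nn - 1) D'"
      and eq: "img (coface i) D = img (coface j) D'" for i j D D'
  proof -
    have nn2: "2 \<le> nn"
    proof (rule ccontr)
      assume "\<not> 2 \<le> nn"
      then have "nn = 1" using nn by simp
      then show False using ij kh by linarith
    qed
    have avD: "\<forall>T\<in>D. j - 1 \<notin> T"
    proof (intro ballI notI)
      fix T assume T: "T \<in> D" and jT: "j - 1 \<in> T"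
      have cj: "coface i (j - 1) = j" using ij by (simp add: coface_def)
      have "coface i ` T \<in> img (coface i) D" using T by (simp add: img_def)
      then have "coface i ` T \<in> img (coface j) D'" using eq by simp
      then have "j \<notin> coface i ` T" by (rule img_avoid)
      moreover have "j \<in> coface i ` T" using jT cj by (metis imageI)
      ultimately show False by contradiction
    qed
    have l1: "1 \<le> nn - 1" using nn2 by simp
    have jb: "j - 1 \<le> nn - 1" using ij by simp
    obtain E where E: "rep (nn - 1 - 1) E" and DE: "D = img (coface (j - 1)) E"
      using rep_pre[OF D jb l1 avD] by blast
    have "img (coface j) (img (coface i) E) = img (coface i) (img (coface (j - 1)) E)"
      unfolding img_comp by (rule img_cong) (simp add: coface_comm[OF ij(1)])
    also have "\<dots> = img (coface j) D'" using DE eq by simp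
    finally have iE: "img (coface i) E = D'" by (rule img_inj)
    have b1: "\<forall>t\<le>nn - 1 - 1. coface i t \<le> nn - 1" using coface_bound[OF l1] .
    have b2: "\<forall>t\<le>nn - 1 - 1. coface (j - 1) t \<le> nn - 1" using coface_bound[OF l1] .
    have xj: "x j \<in> cells (ZZ n) (nn - 1)" using xi ij by simp
    have xi': "x i \<in> cells (ZZ n) (nn - 1)" using xi ij by simp
    have c: "act (ZZ n) (nn - 1 - 1) (nn - 1) (coface i) (x j) =
             act (ZZ n) (nn - 1 - 1) (nn - 1) (coface (j - 1)) (x i)"
      using compat[OF ij] by (simp only: face_ZZ)
    have "clampN n (valF (nn - 1) (x j) D') =
          clampN n (valF (nn - 1 - 1) (act (ZZ n) (nn - 1 - 1) (nn - 1) (coface i) (x j)) E)"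
      using valF_act[OF xj b1 E] iE by simp
    also have "\<dots> = clampN n (valF (nn - 1 - 1) (act (ZZ n) (nn - 1 - 1) (nn - 1) (coface (j - 1)) (x i)) E)"
      using c by simp
    also have "\<dots> = clampN n (valF (nn - 1) (x i) D)"
      using valF_act[OF xi' b2 E] DE by simp
    finally show ?thesis by simp
  qed
  have cons: "clampN n (valF (nn - 1) (x i) D) = clampN n (valF (nn - 1) (x j) D')"
    if "i \<le> nn" "j \<le> nn" "i \<noteq> kh" "j \<noteq> kh" "rep (nn - 1) D" "rep (nn - 1) D'"
      and eq: "img (coface i) D = img (coface j) D'" for i j D D'
  proof (cases i j rule: linorder_cases)
    case less then show ?thesis using cons_lt that by blast
  next
    case equal
    then have "D = D'" using eq img_inj by blast
    then show ?thesis using equal by simp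
  next
    case greater then show ?thesis using cons_lt[of j i D' D] that by simp
  qed
  define P where "P C p \<longleftrightarrow> fst p \<le> nn \<and> fst p \<noteq> kh \<and> rep (nn - 1) (snd p) \<and>
      C = img (coface (fst p)) (snd p)" for C p
  define \<phi> where "\<phi> C = (if \<exists>p. P C p then valF (nn - 1) (x (fst (SOME p. P C p))) (snd (SOME p. P C p)) else 0)" for C
  define y where "y = Yc n nn \<phi>"
  have ymem: "y \<in> cells (ZZ n) nn" unfolding y_def using Y_mem assms by blast
  have faces: "face (ZZ n) nn i y = x i" if i: "i \<le> nn" "i \<noteq> kh" for i
  proof -
    have "face (ZZ n) nn i y = Yc n (nn - 1) (\<phi> \<circ> img (coface i))"
      unfolding face_ZZ y_def by (rule Y_act[OF coface_bound[OF nn]])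
    also have "\<dots> = Yc n (nn - 1) (valF (nn - 1) (x i))"
    proof (rule Y_cong)
      fix C assume C: "rep (nn - 1) C"
      have ex: "P (img (coface i) C) (i, C)" unfolding P_def using i C by simp
      define p where "p = (SOME p. P (img (coface i) C) p)"
      have Pp: "P (img (coface i) C) p" unfolding p_def using ex by (rule someI)
      have "\<phi> (img (coface i) C) = valF (nn - 1) (x (fst p)) (snd p)"
        unfolding \<phi>_def p_def using ex by auto
      moreover have "clampN n (valF (nn - 1) (x (fst p)) (snd p)) = clampN n (valF (nn - 1) (x i) C)"
        using Pp C i unfolding P_def by (intro cons) auto
      ultimately show "clampN n ((\<phi> \<circ> img (coface i)) C) = clampN n (valF (nn - 1) (x i) C)"
        by simp
    qed
    also have "\<dots> = x i" using val_Y[OF xi[OF i]] by simp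
    finally show ?thesis .
  qed
  show "\<exists>y\<in>cells (ZZ n) nn. \<forall>i\<le>nn. i \<noteq> kh \<longrightarrow> face (ZZ n) nn i y = x i"
    using ymem faces by blast
qed


end
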